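(* Let $\Omega\subset\mathbb{R}^n$ be a bounded, strictly convex domain, let $v\in C(\overline\Omega)$ be convex, and let $a>0$. For a measurable set $F\subset\Omega$, let $V$ be the set of vertices of all paraboloids of opening $-a$ that are tangent from below to $v$ in $\Omega$ at points of $F$. Then $|V|\ge|F|$.
   Context: A paraboloid of opening $-a$ is a function $P(x)=-\frac a2|x|^2+y\cdot x+b$ ($y\in\mathbb{R}^n$, $b\in\mathbb{R}$); its vertex is the point $y/a$ at which it attains its maximum. $P$ is tangent from below to $v$ in $\Omega$ at $x_0\in\Omega$ if $P\le v$ on $\overline\Omega$ and $P(x_0)=v(x_0)$. $|\cdot|$ denotes Lebesgue measure. *)

theory Defs
  imports "HOL-Analysis.Analysis"
begin

definition strictly_convex_domain :: "'a::euclidean_space set \<Rightarrow> bool" where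
  "strictly_convex_domain \<Omega> \<longleftrightarrow> \<Omega> \<noteq> {} \<and> open \<Omega> \<and> connected \<Omega> \<and> convex \<Omega> \<and>
     (\<forall>x\<in>closure \<Omega>. \<forall>y\<in>closure \<Omega>. x \<noteq> y \<longrightarrow> open_segment x y \<subseteq> \<Omega>)"

definition paraboloid :: "real \<Rightarrow> 'a::euclidean_space \<Rightarrow> real \<Rightarrow> 'a \<Rightarrow> real" where
  "paraboloid a y b x = - (a / 2) * (norm x)\<^sup>2 + y \<bullet> x + b"

definition tangent_below :: "('a::euclidean_space \<Rightarrow> real) \<Rightarrow> ('a \<Rightarrow> real) \<Rightarrow> 'a set \<Rightarrow> 'a \<Rightarrow> bool" where
  "tangent_below P v \<Omega> x0 \<longleftrightarrow> x0 \<in> \<Omega> \<and> (\<forall>x\<in>closure \<Omega>. P x \<le> v x) \<and> P x0 = v x0"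

definition vertex_set :: "real \<Rightarrow> ('a::euclidean_space \<Rightarrow> real) \<Rightarrow> 'a set \<Rightarrow> 'a set \<Rightarrow> 'a set" where
  "vertex_set a v \<Omega> F = {(1 / a) *\<^sub>R y | y. \<exists>b. \<exists>x0\<in>F. tangent_below (paraboloid a y b) v \<Omega> x0}"

definition outer_lmeasure :: "'a::euclidean_space set \<Rightarrow> ennreal" where
  "outer_lmeasure S = (INF W\<in>{W. W \<in> sets lebesgue \<and> S \<subseteq> W}. emeasure lebesgue W)"

end

theory Submission
  imports Defs
begin

lemma prox_one_side:
  fixes K :: "'a::euclidean_space set" and v :: "'a \<Rightarrow> real"
  assumes K: "convex K" and cv: "convex_on K v" and a: "a > 0"
    and x1: "x1 \<in> K" and x2: "x2 \<in> K"
    and min1: "\<forall>y\<in>K. v x1 + a/2 * (norm (x1 - z1))\<^sup>2 \<le> v y + a/2 * (norm (y - z1))\<^sup>2"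
    and t: "0 < t" "t \<le> 1"
  shows "0 \<le> v x2 - v x1 + a * ((x2 - x1) \<bullet> (x1 - z1)) + a/2 * t * (norm (x2 - x1))\<^sup>2"
proof -
  define xt where "xt = (1 - t) *\<^sub>R x1 + t *\<^sub>R x2"
  have xtK: "xt \<in> K" unfolding xt_def using K x1 x2 t by (simp add: convex_def)
  have cvx: "v xt \<le> (1 - t) * v x1 + t * v x2"
    unfolding xt_def using cv x1 x2 t by (intro convex_onD) auto
  have eq: "xt - z1 = (x1 - z1) + t *\<^sub>R (x2 - x1)" unfolding xt_def by (simp add: algebra_simps)
  have n2: "(norm (xt - z1))\<^sup>2 = (norm (x1 - z1))\<^sup>2 + 2 * t * ((x2 - x1) \<bullet> (x1 - z1)) + t\<^sup>2 * (norm (x2 - x1))\<^sup>2"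
    unfolding eq power2_norm_eq_inner by (simp add: inner_add_left inner_add_right inner_commute algebra_simps power2_eq_square)
  have "v x1 + a/2 * (norm (x1 - z1))\<^sup>2 \<le> v xt + a/2 * (norm (xt - z1))\<^sup>2"
    using min1 xtK by blast
  then have "0 \<le> t * (v x2 - v x1 + a * ((x2 - x1) \<bullet> (x1 - z1)) + a/2 * t * (norm (x2 - x1))\<^sup>2)"
    using cvx unfolding n2 by (simp add: algebra_simps power2_eq_square)
  then show ?thesis using t by (simp add: zero_le_mult_iff)
qed

lemma prox_lip:
  fixes K :: "'a::euclidean_space set" and v :: "'a \<Rightarrow> real"
  assumes K: "convex K" and cv: "convex_on K v" and a: "a > 0"
    and x1: "x1 \<in> K" and x2: "x2 \<in> K"
    and min1: "\<forall>y\<in>K. v x1 + a/2 * (norm (x1 - z1))\<^sup>2 \<le> v y + a/2 * (norm (y - z1))\<^sup>2"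
    and min2: "\<forall>y\<in>K. v x2 + a/2 * (norm (x2 - z2))\<^sup>2 \<le> v y + a/2 * (norm (y - z2))\<^sup>2"
  shows "norm (x1 - x2) \<le> norm (z1 - z2)"
proof (rule ccontr)
  assume neg: "\<not> ?thesis"
  define D where "D = norm (x2 - x1)"
  define n where "n = norm (z1 - z2)"
  have Dn: "D > n" using neg unfolding D_def n_def by (simp add: norm_minus_commute)
  have n0: "n \<ge> 0" unfolding n_def by simp
  define t where "t = (D - n) / (2 * D)"
  have D0: "D > 0" using Dn n0 by linarith
  have t: "0 < t" "t \<le> 1" unfolding t_def using Dn D0 n0 by (auto simp: field_simps)
  have A: "0 \<le> v x2 - v x1 + a * ((x2 - x1) \<bullet> (x1 - z1)) + a/2 * t * D\<^sup>2"
    using prox_one_side[OF K cv a x1 x2 min1 t] unfolding D_def .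
  have B: "0 \<le> v x1 - v x2 + a * ((x1 - x2) \<bullet> (x2 - z2)) + a/2 * t * D\<^sup>2"
    using prox_one_side[OF K cv a x2 x1 min2 t] unfolding D_def by (simp add: norm_minus_commute)
  define E1 where "E1 = (x2 - x1) \<bullet> (x1 - z1)"
  define E2 where "E2 = (x1 - x2) \<bullet> (x2 - z2)"
  have hh: "a/2 * t * D\<^sup>2 = (a * t * D\<^sup>2) / 2" by simp
  have "0 \<le> a * E1 + a * E2 + a * t * D\<^sup>2" using A B unfolding hh E1_def[symmetric] E2_def[symmetric] by linarith
  also have "E1 + E2 = - D\<^sup>2 + (x2 - x1) \<bullet> (z2 - z1)"
    unfolding E1_def E2_def D_def power2_norm_eq_inner by (simp add: inner_diff_left inner_diff_right inner_commute algebra_simps)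
  then have "a * E1 + a * E2 + a * t * D\<^sup>2 = a * (- D\<^sup>2 + (x2 - x1) \<bullet> (z2 - z1) + t * D\<^sup>2)"
    by (metis distrib_left mult.assoc)
  finally have "0 \<le> a * (- D\<^sup>2 + (x2 - x1) \<bullet> (z2 - z1) + t * D\<^sup>2)" .
  then have "0 \<le> - D\<^sup>2 + (x2 - x1) \<bullet> (z2 - z1) + t * D\<^sup>2" using a
    by (simp add: zero_le_mult_iff)
  then have 1: "(1 - t) * D\<^sup>2 \<le> (x2 - x1) \<bullet> (z2 - z1)"
    by (simp add: algebra_simps)
  have 2: "(x2 - x1) \<bullet> (z2 - z1) \<le> D * n" unfolding D_def n_def
    using norm_cauchy_schwarz[of "x2 - x1" "z2 - z1"] by (simp add: norm_minus_commute)
  have "(1 - t) * D\<^sup>2 = D * (D + n) / 2" unfolding t_def using D0 by (simp add: field_simps power2_eq_square)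
  with 1 2 have "D * (D + n) / 2 \<le> D * n" by linarith
  then have "D + n \<le> 2 * n" using D0 by (simp add: field_simps)
  with Dn show False by linarith
qed

lemma subgrad_exists:
  fixes K \<Omega> :: "'a::euclidean_space set" and v :: "'a \<Rightarrow> real"
  assumes cv: "convex_on K v" and K: "convex K" and O: "open \<Omega>" "\<Omega> \<subseteq> K" and x0: "x0 \<in> \<Omega>"
  shows "\<exists>q. \<forall>x\<in>K. v x0 + q \<bullet> (x - x0) \<le> v x"
proof -
  define T where "T = {p::'a\<times>real. fst p \<in> K \<and> v (fst p) < snd p}"
  have cT: "convex T"
  proof (rule convexI)
    fix p q :: "'a \<times> real" and u w :: real
    assume p: "p \<in> T" and q: "q \<in> T" and uw0: "0 \<le> u" "0 \<le> w" "u + w = 1"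
    have uw: "0 \<le> u \<and> 0 \<le> w \<and> u + w = 1" using uw0 by simp
    have u: "u = 1 - w" using uw by simp
    have fK: "fst (u *\<^sub>R p + w *\<^sub>R q) \<in> K"
      using p q uw K unfolding T_def convex_def by auto
    have "v (fst (u *\<^sub>R p + w *\<^sub>R q)) \<le> u * v (fst p) + w * v (fst q)"
      using convex_onD[OF cv, of w "fst p" "fst q"] p q uw unfolding T_def u by auto
    also have "\<dots> < u * snd p + w * snd q"
    proof (cases "u = 0")
      case True
      then show ?thesis using uw q unfolding T_def by auto
    next
      case False
      then have "u > 0" using uw by auto
      then have "u * v (fst p) < u * snd p" using p unfolding T_def by auto
      moreover have "w * v (fst q) \<le> w * snd q" using q uw unfolding T_def
        by (intro mult_left_mono) auto
      ultimately show ?thesis by linarith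
    qed
    finally show "u *\<^sub>R p + w *\<^sub>R q \<in> T" using fK unfolding T_def by simp
  qed
  have x0K: "x0 \<in> K" using O x0 by auto
  have TnE: "T \<noteq> {}" using x0K unfolding T_def by (auto intro!: exI[of _ "x0"] exI[of _ "v x0 + 1"])
  have disj: "{(x0, v x0)} \<inter> T = {}" unfolding T_def by auto
  obtain A b where Ab: "A \<noteq> 0" "\<forall>x\<in>{(x0, v x0)}. A \<bullet> x \<le> b" "\<forall>x\<in>T. b \<le> A \<bullet> x"
    using separating_hyperplane_sets[OF convex_singleton cT _ TnE disj] by auto
  obtain p c where A: "A = (p, c)" by (cases A)
  have H: "p \<bullet> x0 + c * v x0 \<le> p \<bullet> x + c * t" if "x \<in> K" "v x < t" for x t
  proof -
    have "(x, t) \<in> T" using that unfolding T_def by auto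
    then show ?thesis using Ab(2,3) unfolding A by (force simp: inner_Pair)
  qed
  have c0: "c \<ge> 0" using H[OF x0K, of "v x0 + 1"] by (simp add: distrib_left)
  have cne: "c \<noteq> 0"
  proof
    assume c: "c = 0"
    obtain e where e: "e > 0" "ball x0 e \<subseteq> \<Omega>" using O(1) x0 open_contains_ball by blast
    define s where "s = e / (2 * (norm p + 1))"
    have np: "norm p + 1 > 0" by (simp add: add_nonneg_pos)
    have s0: "s > 0" unfolding s_def using e np by simp
    have q1: "norm p / (2 * (norm p + 1)) < 1" using np by (simp add: field_simps)
    have "s * norm p = e * (norm p / (2 * (norm p + 1)))" unfolding s_def by simp
    also have "\<dots> < e * 1" using q1 e(1) by (intro mult_strict_left_mono) auto
    finally have "s * norm p < e" by simp
    then have "x0 - s *\<^sub>R p \<in> ball x0 e" using s0 by (simp add: dist_norm)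
    then have xK: "x0 - s *\<^sub>R p \<in> K" using e(2) O(2) by blast
    have "p \<bullet> x0 \<le> p \<bullet> (x0 - s *\<^sub>R p)" using H[OF xK, of "v (x0 - s *\<^sub>R p) + 1"] c by simp
    then have "s * (p \<bullet> p) \<le> 0" by (simp add: inner_diff_right)
    then have "p \<bullet> p \<le> 0" using s0 by (simp add: mult_le_0_iff)
    then have "p = 0" by (metis inner_ge_zero inner_eq_zero_iff order_antisym)
    with c A Ab(1) show False by (simp add: zero_prod_def)
  qed
  have cpos: "c > 0" using c0 cne by simp
  show ?thesis
  proof (intro exI ballI)
    fix x assume xK: "x \<in> K"
    show "v x0 + (- (1/c) *\<^sub>R p) \<bullet> (x - x0) \<le> v x"
    proof (rule field_le_epsilon)
      fix d :: real assume d: "d > 0"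
      have "p \<bullet> x0 + c * v x0 \<le> p \<bullet> x + c * (v x + d)" using H[OF xK, of "v x + d"] d by simp
      then have "c * (v x0 + (- (1/c) *\<^sub>R p) \<bullet> (x - x0)) \<le> c * (v x + d)"
        using cpos by (simp add: inner_diff_right algebra_simps)
      then show "v x0 + (- (1/c) *\<^sub>R p) \<bullet> (x - x0) \<le> v x + d"
        using cpos by simp
    qed
  qed
qed


lemma emeasure_lborel_cball_eq:
  "emeasure lebesgue (cball (c::'a::euclidean_space) r) = emeasure lebesgue (cball (d::'a) r)"
  by (cases "r \<ge> 0") (simp_all add: emeasure_cball)

lemma lip_image_le:
  fixes g :: "'a::euclidean_space \<Rightarrow> 'a"
  assumes lip: "\<And>x y. dist (g x) (g y) \<le> dist x y" and U: "open U"
    and F: "F \<in> sets lebesgue" "F \<subseteq> g ` U"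
  shows "emeasure lebesgue F \<le> emeasure lebesgue U"
proof -
  define K where "K = {i::'a\<times>real. 0 < snd i \<and> cball (fst i) (snd i) \<subseteq> U}"
  have cov: "\<exists>i. i \<in> K \<and> x \<in> cball (fst i) (snd i) \<and> snd i < d" if xU: "x \<in> U" and d0: "0 < d" for x d
  proof -
    obtain e where e: "e > 0" "cball x e \<subseteq> U" using U xU by (metis open_contains_cball)
    show ?thesis using e xU d0
      by (intro exI[of _ "(x, min (d/2) e)"]) (auto simp: K_def)
  qed
  obtain C where C: "countable C" "C \<subseteq> K"
    "pairwise (\<lambda>i j. disjnt (cball (fst i) (snd i)) (cball (fst j) (snd j))) C"
    "negligible (U - (\<Union>i\<in>C. cball (fst i) (snd i)))"
    by (rule Vitali_covering_theorem_cballs[of K snd U fst]) (use cov in \<open>auto simp: K_def\<close>)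
  define N where "N = U - (\<Union>i\<in>C. cball (fst i) (snd i))"
  have negN: "negligible (g ` N)"
  proof (rule negligible_locally_Lipschitz_image)
    show "negligible N" using C(4) unfolding N_def .
    show "\<exists>T B. open T \<and> x \<in> T \<and> (\<forall>y\<in>N \<inter> T. norm (g y - g x) \<le> B * norm (y - x))" for x
      using lip by (intro exI[of _ UNIV] exI[of _ 1]) (auto simp: dist_norm)
  qed simp
  obtain f :: "'a\<times>real \<Rightarrow> nat" where inj: "inj_on f C" using C(1) by (rule countableE)
  define idx where "idx n = the_inv_into C f n" for n
  define B where "B n = (if n \<in> f ` C then cball (fst (idx n)) (snd (idx n)) else {})" for n
  define D where "D n = (if n \<in> f ` C then cball (g (fst (idx n))) (snd (idx n)) else {})" for n
  have idx: "idx (f i) = i" if "i \<in> C" for i unfolding idx_def by (rule the_inv_into_f_f[OF inj that])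
  have idxC: "idx n \<in> C" if "n \<in> f ` C" for n using that idx by force
  have UB: "(\<Union>n. B n) \<subseteq> U" using C(2) idxC unfolding B_def K_def by (auto split: if_splits)
  have gU: "g ` U \<subseteq> (\<Union>n. D n) \<union> g ` N"
  proof
    fix y assume "y \<in> g ` U"
    then obtain x where x: "x \<in> U" "y = g x" by auto
    show "y \<in> (\<Union>n. D n) \<union> g ` N"
    proof (cases "x \<in> N")
      case True then show ?thesis using x by auto
    next
      case False
      then obtain i where i: "i \<in> C" "x \<in> cball (fst i) (snd i)" using x unfolding N_def by auto
      have "dist (g (fst i)) (g x) \<le> snd i" using lip[of "fst i" x] i(2) by simp
      then have "y \<in> D (f i)" unfolding D_def using i x idx by auto
      then show ?thesis by auto
    qed
  qed
  have disj: "disjoint_family B"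
    unfolding disjoint_family_on_def
  proof (intro ballI impI)
    fix m n :: nat assume mn: "m \<noteq> n"
    show "B m \<inter> B n = {}"
    proof (cases "m \<in> f ` C \<and> n \<in> f ` C")
      case True
      then obtain i j where ij: "i \<in> C" "j \<in> C" "m = f i" "n = f j" by auto
      then have "i \<noteq> j" using mn by auto
      then have "disjnt (cball (fst i) (snd i)) (cball (fst j) (snd j))" using C(3) ij unfolding pairwise_def by auto
      then show ?thesis unfolding B_def using ij idx by (auto simp: disjnt_def)
    next
      case False then show ?thesis unfolding B_def by auto
    qed
  qed
  have eqBD: "emeasure lebesgue (D n) = emeasure lebesgue (B n)" for n
    unfolding B_def D_def
    by (cases "n \<in> f ` C") (simp_all only: if_True if_False emeasure_lborel_cball_eq)
  have Dsets: "range D \<subseteq> sets lebesgue" unfolding D_def by auto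
  have Bsets: "range B \<subseteq> sets lebesgue" unfolding B_def by auto
  have "emeasure lebesgue F \<le> emeasure lebesgue ((\<Union>n. D n) \<union> g ` N)"
    using F gU Dsets negN by (intro emeasure_mono) (auto intro: negligible_imp_sets)
  also have "\<dots> \<le> emeasure lebesgue (\<Union>n. D n) + emeasure lebesgue (g ` N)"
    using Dsets negN by (intro emeasure_subadditive) (auto intro: negligible_imp_sets)
  also have "emeasure lebesgue (g ` N) = 0" using negN negligible_iff_null_sets by blast
  also have "emeasure lebesgue (\<Union>n. D n) \<le> (\<Sum>n. emeasure lebesgue (D n))"
    using Dsets by (rule emeasure_subadditive_countably)
  also have "\<dots> = (\<Sum>n. emeasure lebesgue (B n))" using eqBD by simp
  also have "\<dots> = emeasure lebesgue (\<Union>n. B n)" using Bsets disj by (rule suminf_emeasure)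
  also have "\<dots> \<le> emeasure lebesgue U" using UB Bsets U by (intro emeasure_mono) auto
  finally show ?thesis by simp
qed


theorem lemma3p2:
  fixes \<Omega> F :: "'a::euclidean_space set" and v :: "'a \<Rightarrow> real" and a :: real
  assumes "strictly_convex_domain \<Omega>" and "bounded \<Omega>"
    and "continuous_on (closure \<Omega>) v" and "convex_on (closure \<Omega>) v"
    and "a > 0"
    and "F \<in> sets lebesgue" and "F \<subseteq> \<Omega>"
  shows "outer_lmeasure (vertex_set a v \<Omega> F) \<ge> emeasure lebesgue F"
proof -
  define K where "K = closure \<Omega>"
  have Ons: "\<Omega> \<noteq> {}" and Oo: "open \<Omega>" using assms(1) unfolding strictly_convex_domain_def by auto
  have Ocv: "convex \<Omega>" using assms(1) unfolding strictly_convex_domain_def by auto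
  have Kc: "compact K" using assms(2) unfolding K_def by (simp add: compact_closure)
  have Kne: "K \<noteq> {}" using Ons unfolding K_def by simp
  have Kcv: "convex K" using Ocv unfolding K_def by (rule convex_closure)
  have OK: "\<Omega> \<subseteq> K" unfolding K_def by (rule closure_subset)
  have vc: "continuous_on K v" and vcv: "convex_on K v" using assms(3,4) unfolding K_def by auto
  define h where "h z x = v x + a/2 * (norm (x - z))\<^sup>2" for z x
  have ex: "\<exists>x\<in>K. \<forall>y\<in>K. h z x \<le> h z y" for z
  proof (rule continuous_attains_inf[OF Kc Kne])
    show "continuous_on K (h z)" unfolding h_def by (intro continuous_intros vc)
  qed
  define P where "P z = (SOME x. x \<in> K \<and> (\<forall>y\<in>K. h z x \<le> h z y))" for z
  have P: "P z \<in> K \<and> (\<forall>y\<in>K. h z (P z) \<le> h z y)" for z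
    unfolding P_def by (rule someI_ex) (use ex[of z] in blast)
  have lipP: "dist (P z1) (P z2) \<le> dist z1 z2" for z1 z2
    using prox_lip[OF Kcv vcv assms(5), of "P z1" "P z2" z1 z2] P[of z1] P[of z2]
    unfolding h_def dist_norm by auto
  have FP: "F \<subseteq> P ` vertex_set a v \<Omega> F"
  proof
    fix x0 assume x0: "x0 \<in> F"
    then have x0O: "x0 \<in> \<Omega>" using assms(7) by auto
    then have x0K: "x0 \<in> K" using OK by auto
    obtain q where q: "\<forall>x\<in>K. v x0 + q \<bullet> (x - x0) \<le> v x"
      using subgrad_exists[OF vcv Kcv Oo OK x0O] by blast
    define z where "z = x0 + (1/a) *\<^sub>R q"
    have min: "\<forall>y\<in>K. h z x0 \<le> h z y"
    proof
      fix y assume y: "y \<in> K"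
      have e1: "y - z = (y - x0) - (1/a) *\<^sub>R q" unfolding z_def by (simp add: algebra_simps)
      have e2: "x0 - z = - ((1/a) *\<^sub>R q)" unfolding z_def by simp
      have "(norm (y - z))\<^sup>2 = (norm (x0 - z))\<^sup>2 + (norm (y - x0))\<^sup>2 - 2/a * (q \<bullet> (y - x0))"
        unfolding e1 e2 power2_norm_eq_inner
        by (simp add: inner_diff_left inner_diff_right inner_commute algebra_simps)
      then have "a/2 * (norm (y - z))\<^sup>2 = a/2 * ((norm (x0 - z))\<^sup>2 + (norm (y - x0))\<^sup>2 - 2/a * (q \<bullet> (y - x0)))"
        by simp
      also have "\<dots> = a/2 * (norm (x0 - z))\<^sup>2 + a/2 * (norm (y - x0))\<^sup>2 - (a/2 * (2/a)) * (q \<bullet> (y - x0))"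
        by (simp only: right_diff_distrib distrib_left mult.assoc)
      also have "a/2 * (2/a) = 1" using assms(5) by simp
      finally have "a/2 * (norm (y - z))\<^sup>2 = a/2 * (norm (x0 - z))\<^sup>2 + a/2 * (norm (y - x0))\<^sup>2 - q \<bullet> (y - x0)"
        by simp
      moreover have "v x0 + q \<bullet> (y - x0) \<le> v y" using q y by blast
      moreover have "0 \<le> a/2 * (norm (y - x0))\<^sup>2" using assms(5) by simp
      ultimately show "h z x0 \<le> h z y" unfolding h_def by linarith
    qed
    have Pz: "P z = x0"
    proof -
      have "norm (P z - x0) \<le> norm (z - z)"
        using prox_lip[OF Kcv vcv assms(5), of "P z" x0 z z] P[of z] x0K min
        unfolding h_def by auto
      then show ?thesis by simp
    qed
    define b where "b = h z x0 - a/2 * (norm z)\<^sup>2"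
    have par: "paraboloid a (a *\<^sub>R z) b x = h z x0 - a/2 * (norm (x - z))\<^sup>2" for x
    proof -
      have NE: "(norm (x - z))\<^sup>2 = (norm x)\<^sup>2 - 2 * (z \<bullet> x) + (norm z)\<^sup>2"
        unfolding power2_norm_eq_inner by (simp add: inner_diff_left inner_diff_right inner_commute)
      have "a/2 * (norm (x - z))\<^sup>2 = a/2 * (norm x)\<^sup>2 - a * (z \<bullet> x) + a/2 * (norm z)\<^sup>2"
        unfolding NE by (simp add: algebra_simps)
      moreover have "(a *\<^sub>R z) \<bullet> x = a * (z \<bullet> x)" by simp
      ultimately show ?thesis unfolding paraboloid_def b_def by linarith
    qed
    have tb: "tangent_below (paraboloid a (a *\<^sub>R z) b) v \<Omega> x0"
      unfolding tangent_below_def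
    proof (intro conjI ballI)
      show "x0 \<in> \<Omega>" by (rule x0O)
      fix x assume "x \<in> closure \<Omega>"
      then have "h z x0 \<le> h z x" using min unfolding K_def by blast
      then show "paraboloid a (a *\<^sub>R z) b x \<le> v x" unfolding par h_def by simp
    next
      show "paraboloid a (a *\<^sub>R z) b x0 = v x0" unfolding par h_def by simp
    qed
    have zV: "z \<in> vertex_set a v \<Omega> F"
      unfolding vertex_set_def using tb x0 assms(5)
      by (intro CollectI exI[of _ "a *\<^sub>R z"]) auto
    show "x0 \<in> P ` vertex_set a v \<Omega> F" using Pz zV by (metis image_eqI)
  qed
  show ?thesis
    unfolding outer_lmeasure_def
  proof (rule INF_greatest)
    fix W assume W: "W \<in> {W. W \<in> sets lebesgue \<and> vertex_set a v \<Omega> F \<subseteq> W}"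
    show "emeasure lebesgue F \<le> emeasure lebesgue W"
    proof (rule ennreal_le_epsilon)
      fix e :: real assume e: "0 < e"
      obtain T where T: "open T" "W \<subseteq> T" "(T - W) \<in> lmeasurable" "emeasure lebesgue (T - W) < ennreal e"
        using sets_lebesgue_outer_open[of W e] W e by auto
      have TS: "T \<in> sets lebesgue" using T(1) by auto
      have "emeasure lebesgue F \<le> emeasure lebesgue T"
        by (rule lip_image_le[OF lipP T(1) assms(6)]) (use FP W T(2) in blast)
      also have "\<dots> \<le> emeasure lebesgue W + emeasure lebesgue (T - W)"
      proof -
        have "T = W \<union> (T - W)" using T(2) by auto
        then have "emeasure lebesgue T = emeasure lebesgue (W \<union> (T - W))" by simp
        also have "\<dots> \<le> emeasure lebesgue W + emeasure lebesgue (T - W)"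
          using W T(3) by (intro emeasure_subadditive) auto
        finally show ?thesis .
      qed
      also have "\<dots> \<le> emeasure lebesgue W + ennreal e" using T(4) by (intro add_left_mono) simp
      finally show "emeasure lebesgue F \<le> emeasure lebesgue W + ennreal e" .
    qed
  qed
qed

end
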